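(* For every $\sigma\in S_t$, the pattern set $\{(\sigma,[t-1])\}$ (the consecutive pattern $\sigma$) admits a finite enumeration scheme of depth $t$ in which every reversibly deletable set $R_p$ is either $\emptyset$ or $\{1\}$.
   Context: Vincular pattern $(\sigma,X)$, $\sigma\in S_\ell$, $X\subseteq[\ell-1]$: $\pi$ contains it if some subsequence $\pi_{i_1}\cdots\pi_{i_\ell}$ ($i_1<\dots<i_\ell$) is order-isomorphic to $\sigma$ with $i_{x+1}=i_x+1$ for $x\in X$. For $p\in S_k$ and $w\in[n]^k$ with distinct letters order-isomorphic to $p$, $S_n^B(p;w)$ is the set of $B$-avoiding $\pi\in S_n$ with $\pi_i=w_i$ ($i\le k$). Spacing vector $\vec g(n,w)$: $i$-th component $c_i-c_{i-1}-1$, $c_i$ the $i$-th smallest letter of $w$, $c_0=0,c_{k+1}=n+1$. $\vec v\in\mathbb{N}^{k+1}$ is a gap vector for $p$ w.r.t. $B$ if $S_n^B(p;w)=\emptyset$ whenever $\vec g(n,w)\ge\vec v$ componentwise. $d_R$ deletes the entries in positions $R$ and reduces (for words: subtract from each remaining letter the number of deleted letters smaller than it). $R\subseteq[k]$ is reversibly deletable for $p$ w.r.t. $B$ if, for every $n$ and $w$ with $S_n^B(p;w)\ne\emptyset$, $d_R$ is a bijection $S_n^B(p;w)\to S_{n-|R|}^B(d_R(p);d_R(w))$. A child of $p\in S_k$ is any $p'\in S_{k+1}$ with $p'_1\cdots p'_k$ order-isomorphic to $p$. An enumeration scheme for $B$ is a set $E$ of triples $(p,G_p,R_p)$, $p$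 a permutation, $G_p$ a set of gap vectors for $p$ w.r.t. $B$, $R_p$ a reversibly deletable set for $p$ w.r.t. $B$, such that: $(\epsilon,\emptyset,\emptyset)\in E$ ($\epsilon$ the empty permutation); if $(p,G_p,R_p)\in E$ with $R_p=\emptyset$ and $\vec 0\notin G_p$ then every child of $p$ occurs as the first entry of a triple in $E$; if $R_p\ne\emptyset$ then $d_{R_p}(p)$ occurs as the first entry of a triple in $E$. Its depth is the maximum length of a $p$ occurring in $E$. *)

theory Defs
  imports Main
begin

text \<open>Permutations and words are lists of natural numbers; letters are
1-based (a permutation of length n has letter set {1..n}); positions in the paper are
1-based, so position i corresponds to list index i-1.\<close>

definition is_perm :: "nat \<Rightarrow> nat list \<Rightarrow> bool" where
  "is_perm n \<pi> \<longleftrightarrow> distinct \<pi> \<and> set \<pi> = {1..n}"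

definition order_iso :: "nat list \<Rightarrow> nat list \<Rightarrow> bool" where
  "order_iso a b \<longleftrightarrow> length a = length b \<and>
     (\<forall>i<length a. \<forall>j<length a. (a!i < a!j) = (b!i < b!j))"

text \<open>Vincular pattern (sigma, X) with X a set of 1-based adjacency requirements:
for x in X, i_(x+1) = i_x + 1.  Here idx is the 0-based list of chosen positions.\<close>
definition contains_vinc :: "nat list \<Rightarrow> nat list \<Rightarrow> nat set \<Rightarrow> bool" where
  "contains_vinc \<pi> \<sigma> X \<longleftrightarrow>
     (\<exists>idx. length idx = length \<sigma> \<and> sorted_wrt (<) idx \<and> (\<forall>i\<in>set idx. i < length \<pi>) \<and>
        order_iso (map (\<lambda>i. \<pi>!i) idx) \<sigma> \<and>
        (\<forall>x\<in>X. idx!x = idx!(x-1) + 1))"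

definition avoids :: "(nat list \<times> nat set) set \<Rightarrow> nat list \<Rightarrow> bool" where
  "avoids B \<pi> \<longleftrightarrow> (\<forall>(\<sigma>,X)\<in>B. \<not> contains_vinc \<pi> \<sigma> X)"

definition admissible :: "nat \<Rightarrow> nat list \<Rightarrow> nat list \<Rightarrow> bool" where
  "admissible n p w \<longleftrightarrow> length w = length p \<and> distinct w \<and> set w \<subseteq> {1..n} \<and> order_iso w p"

definition SnB :: "(nat list \<times> nat set) set \<Rightarrow> nat \<Rightarrow> nat list \<Rightarrow> nat list set" where
  "SnB B n w = {\<pi>. is_perm n \<pi> \<and> avoids B \<pi> \<and> take (length w) \<pi> = w}"

definition gvec :: "nat \<Rightarrow> nat list \<Rightarrow> nat list" where
  "gvec n w = (let c = 0 # sort w @ [n+1] in map (\<lambda>i. c!(i+1) - c!i - 1) [0..<length w + 1])"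

definition is_gap_vector :: "(nat list \<times> nat set) set \<Rightarrow> nat list \<Rightarrow> nat list \<Rightarrow> bool" where
  "is_gap_vector B p v \<longleftrightarrow> length v = length p + 1 \<and>
     (\<forall>n w. admissible n p w \<and> list_all2 (\<le>) v (gvec n w) \<longrightarrow> SnB B n w = {})"

text \<open>d_R: delete entries in (1-based) positions R and reduce.\<close>
definition del :: "nat set \<Rightarrow> nat list \<Rightarrow> nat list" where
  "del R xs = (let kept = [xs!i. i \<leftarrow> [0..<length xs], Suc i \<notin> R];
                   gone = [xs!i. i \<leftarrow> [0..<length xs], Suc i \<in> R]
               in map (\<lambda>a. a - length (filter (\<lambda>b. b < a) gone)) kept)"

definition rev_deletable :: "(nat list \<times> nat set) set \<Rightarrow> nat list \<Rightarrow> nat set \<Rightarrow> bool" where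
  "rev_deletable B p R \<longleftrightarrow> R \<subseteq> {1..length p} \<and>
     (\<forall>n w. admissible n p w \<and> SnB B n w \<noteq> {} \<longrightarrow>
        bij_betw (del R) (SnB B n w) (SnB B (n - card R) (del R w)))"

definition is_child :: "nat list \<Rightarrow> nat list \<Rightarrow> bool" where
  "is_child p p' \<longleftrightarrow> is_perm (length p + 1) p' \<and> order_iso (take (length p) p') p"

definition enum_scheme ::
  "(nat list \<times> nat set) set \<Rightarrow> (nat list \<times> nat list set \<times> nat set) set \<Rightarrow> bool" where
  "enum_scheme B E \<longleftrightarrow>
     ([], {}, {}) \<in> E \<and>
     (\<forall>(p,G,R)\<in>E. is_perm (length p) p \<and> (\<forall>v\<in>G. is_gap_vector B p v) \<and> rev_deletable B p R) \<and>
     (\<forall>(p,G,R)\<in>E. R = {} \<and> replicate (length p + 1) 0 \<notin> G \<longrightarrow>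
         (\<forall>p'. is_child p p' \<longrightarrow> (\<exists>G' R'. (p',G',R') \<in> E))) \<and>
     (\<forall>(p,G,R)\<in>E. R \<noteq> {} \<longrightarrow> (\<exists>G' R'. (del R p, G', R') \<in> E))"

definition scheme_depth :: "(nat list \<times> nat list set \<times> nat set) set \<Rightarrow> nat" where
  "scheme_depth E = Max ((\<lambda>(p,G,R). length p) ` E)"

end

theory Submission
  imports Defs
begin

lemma concat_map_if: "concat (map (\<lambda>i. if P i then [f i] else []) xs) = map f (filter P xs)"
  by (induction xs) auto

lemma concat_map_nil: "concat (map (\<lambda>i. []) xs) = []"
  by (induction xs) auto

lemma del1_cons: "del {1} (a # ys) = map (\<lambda>b. if a < b then b - 1 else b) ys"
proof -
  have u: "[0..<length (a#ys)] = 0 # map Suc [0..<length ys]"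
    by (simp only: length_Cons upt_conv_Cons[of 0 "Suc (length ys)"] map_Suc_upt)
  have f1: "filter (\<lambda>i. Suc i \<notin> {1}) (0 # map Suc [0..<length ys]) = map Suc [0..<length ys]"
    by (simp add: filter_map comp_def)
  have f2: "filter (\<lambda>i. Suc i \<in> {1}) (0 # map Suc [0..<length ys]) = [0]"
    by (simp add: filter_map comp_def)
  have k: "[(a#ys)!i. i \<leftarrow> [0..<length (a#ys)], Suc i \<notin> {1}] = ys"
    unfolding u concat_map_if f1 by (simp add: comp_def map_nth)
  have g: "[(a#ys)!i. i \<leftarrow> [0..<length (a#ys)], Suc i \<in> {1}] = [a]"
    unfolding u concat_map_if f2 by simp
  show ?thesis unfolding del_def Let_def k g by simp
qed

lemma del_empty: "del {} xs = xs"
  unfolding del_def Let_def by (simp add: map_nth concat_map_nil)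


definition cc :: "nat list \<Rightarrow> nat list \<Rightarrow> bool" where
  "cc \<pi> \<sigma> \<longleftrightarrow> (\<exists>i. i + length \<sigma> \<le> length \<pi> \<and> order_iso (take (length \<sigma>) (drop i \<pi>)) \<sigma>)"

lemma map_upt_window:
  assumes "i + t \<le> length \<pi>"
  shows "map ((!) \<pi>) [i..<i+t] = take t (drop i \<pi>)"
  using assms by (intro nth_equalityI) auto




lemma cv_iff: "contains_vinc \<pi> \<sigma> {1..length \<sigma> - 1} \<longleftrightarrow> cc \<pi> \<sigma>"
proof
  assume "contains_vinc \<pi> \<sigma> {1..length \<sigma> - 1}"
  then obtain idx where l: "length idx = length \<sigma>" and s: "sorted_wrt (<) idx"
    and b: "\<forall>i\<in>set idx. i < length \<pi>" and o: "order_iso (map (\<lambda>i. \<pi>!i) idx) \<sigma>"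
    and c: "\<forall>x\<in>{1..length \<sigma> - 1}. idx!x = idx!(x-1) + 1"
    unfolding contains_vinc_def by blast
  define t where "t = length \<sigma>"
  show "cc \<pi> \<sigma>"
  proof (cases "t = 0")
    case True
    then show ?thesis using o l unfolding cc_def t_def by (intro exI[of _ 0]) simp
  next
    case False
    have key: "\<forall>k<t. idx!k = idx!0 + k"
    proof (intro allI impI)
      fix k assume "k < t"
      then show "idx!k = idx!0 + k"
      proof (induction k)
        case 0 then show ?case by simp
      next
        case (Suc k)
        then have "Suc k \<in> {1..length \<sigma> - 1}" unfolding t_def by simp
        with c have "idx!(Suc k) = idx!(Suc k - 1) + 1" by (rule bspec)
        then have "idx!(Suc k) = idx!k + 1" by simp
        moreover have "idx!k = idx!0 + k" using Suc.IH Suc.prems by simp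
        ultimately show ?case by simp
      qed
    qed
    define i where "i = idx!0"
    have "idx!(t-1) \<in> set idx" using False l unfolding t_def by auto
    with b have "idx!(t-1) < length \<pi>" by blast
    moreover have "idx!(t-1) = i + (t-1)" using key False unfolding i_def by (meson diff_less zero_less_one neq0_conv)
    ultimately have bd: "i + t \<le> length \<pi>" using False by linarith
    have "idx = [i..<i+t]"
    proof (rule nth_equalityI)
      show "length idx = length [i..<i+t]" using l unfolding t_def by simp
      fix k assume "k < length idx"
      then have "k < t" using l unfolding t_def by simp
      then have "idx!k = idx!0 + k" using key by blast
      then show "idx!k = [i..<i+t]!k" using \<open>k < t\<close> unfolding i_def by simp
    qed
    with o map_upt_window[OF bd] have "order_iso (take t (drop i \<pi>)) \<sigma>" by simp
    with bd show ?thesis unfolding cc_def t_def by blast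
  qed
next
  assume "cc \<pi> \<sigma>"
  then obtain i where bd: "i + length \<sigma> \<le> length \<pi>"
    and o: "order_iso (take (length \<sigma>) (drop i \<pi>)) \<sigma>" unfolding cc_def by blast
  show "contains_vinc \<pi> \<sigma> {1..length \<sigma> - 1}"
    unfolding contains_vinc_def
  proof (intro exI[of _ "[i..<i+length \<sigma>]"] conjI)
    show "order_iso (map ((!) \<pi>) [i..<i + length \<sigma>]) \<sigma>"
      using o map_upt_window[OF bd] by simp
    show "\<forall>x\<in>set [i..<i + length \<sigma>]. x < length \<pi>" using bd by simp
    show "\<forall>x\<in>{1..length \<sigma> - 1}. [i..<i + length \<sigma>] ! x = [i..<i + length \<sigma>] ! (x - 1) + 1"
    proof
      fix x assume "x \<in> {1..length \<sigma> - 1}"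
      then have "1 \<le> x" "x < length \<sigma>" by auto
      then have "[i..<i + length \<sigma>] ! x = i + x" by simp
      moreover have "[i..<i + length \<sigma>] ! (x - 1) = i + (x - 1)" using \<open>x < length \<sigma>\<close> by simp
      ultimately show "[i..<i + length \<sigma>] ! x = [i..<i + length \<sigma>] ! (x - 1) + 1"
        using \<open>1 \<le> x\<close> by simp
    qed
  qed simp_all
qed




lemma order_iso_map:
  assumes "\<forall>x\<in>set zs. \<forall>y\<in>set zs. (h x < h y) = (x < y)"
  shows "order_iso (map h zs) s = order_iso zs s"
  using assms unfolding order_iso_def by (auto simp: nth_mem)

lemma cc_map:
  assumes "\<forall>x\<in>set zs. \<forall>y\<in>set zs. (h x < h y) = (x < y)"
  shows "cc (map h zs) \<sigma> = cc zs \<sigma>"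
proof -
  have "\<And>i. order_iso (take (length \<sigma>) (drop i (map h zs))) \<sigma> = order_iso (take (length \<sigma>) (drop i zs)) \<sigma>"
  proof -
    fix i
    have "set (take (length \<sigma>) (drop i zs)) \<subseteq> set zs"
      by (meson order_trans set_drop_subset set_take_subset)
    then show "?thesis i" unfolding drop_map take_map
      using assms by (intro order_iso_map) blast
  qed
  then show ?thesis unfolding cc_def by simp
qed

lemma cc_cons:
  "cc (a # ys) \<sigma> \<longleftrightarrow> (length \<sigma> \<le> Suc (length ys) \<and> order_iso (take (length \<sigma>) (a#ys)) \<sigma>) \<or> cc ys \<sigma>"
proof
  assume "cc (a # ys) \<sigma>"
  then obtain i where bd: "i + length \<sigma> \<le> length (a#ys)"
    and o: "order_iso (take (length \<sigma>) (drop i (a#ys))) \<sigma>" unfolding cc_def by blast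
  show "(length \<sigma> \<le> Suc (length ys) \<and> order_iso (take (length \<sigma>) (a#ys)) \<sigma>) \<or> cc ys \<sigma>"
  proof (cases i)
    case 0 then show ?thesis using bd o by simp
  next
    case (Suc j) then show ?thesis using bd o unfolding cc_def by auto
  qed
next
  assume "(length \<sigma> \<le> Suc (length ys) \<and> order_iso (take (length \<sigma>) (a#ys)) \<sigma>) \<or> cc ys \<sigma>"
  then show "cc (a # ys) \<sigma>"
  proof
    assume "length \<sigma> \<le> Suc (length ys) \<and> order_iso (take (length \<sigma>) (a#ys)) \<sigma>"
    then show ?thesis unfolding cc_def by (intro exI[of _ 0]) simp
  next
    assume "cc ys \<sigma>"
    then obtain i where "i + length \<sigma> \<le> length ys"
      "order_iso (take (length \<sigma>) (drop i ys)) \<sigma>" unfolding cc_def by blast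
    then show ?thesis unfolding cc_def by (intro exI[of _ "Suc i"]) simp
  qed
qed




definition fdown :: "nat \<Rightarrow> nat \<Rightarrow> nat" where "fdown a b = (if a < b then b - 1 else b)"
definition gup :: "nat \<Rightarrow> nat \<Rightarrow> nat" where "gup a b = (if a \<le> b then b + 1 else b)"

lemma fg: "fdown a (gup a b) = b" unfolding fdown_def gup_def by auto
lemma gf: "b \<noteq> a \<Longrightarrow> gup a (fdown a b) = b" unfolding fdown_def gup_def by auto
lemma g_ne: "gup a b \<noteq> a" unfolding gup_def by auto
lemma f_mono: "x \<noteq> a \<Longrightarrow> y \<noteq> a \<Longrightarrow> (fdown a x < fdown a y) = (x < y)"
  unfolding fdown_def by auto
lemma g_mono: "(gup a x < gup a y) = (x < y)" unfolding gup_def by auto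

lemma is_perm_length: "is_perm n p \<Longrightarrow> length p = n"
  unfolding is_perm_def by (metis card_atLeastAtMost diff_Suc_1 distinct_card)




lemma fdown_inj: "inj_on (fdown a) (- {a})"
proof (rule inj_onI)
  fix x y assume x: "x \<in> - {a}" and y: "y \<in> - {a}" and e: "fdown a x = fdown a y"
  have "\<not> x < y" using f_mono[of x a y] x y e by simp
  moreover have "\<not> y < x" using f_mono[of y a x] x y e by simp
  ultimately show "x = y" by simp
qed

lemma gup_inj: "inj (gup a)"
proof (rule injI)
  fix x y assume e: "gup a x = gup a y"
  have "\<not> x < y" using g_mono[of a x y] e by simp
  moreover have "\<not> y < x" using g_mono[of a y x] e by simp
  ultimately show "x = y" by simp
qed

lemma perm_down:
  assumes "is_perm n (a # ys)"
  shows "is_perm (n - 1) (map (fdown a) ys)"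
proof -
  have d: "distinct ys" "a \<notin> set ys" and s: "set ys = {1..n} - {a}" and a: "a \<in> {1..n}"
    using assms unfolding is_perm_def by auto
  have "inj_on (fdown a) (set ys)"
    using fdown_inj by (rule inj_on_subset) (use d in auto)
  moreover have "fdown a ` set ys = {1..n-1}"
  proof
    show "fdown a ` set ys \<subseteq> {1..n-1}"
    proof
      fix y assume "y \<in> fdown a ` set ys"
      then obtain x where "x \<in> set ys" "y = fdown a x" by auto
      then have "x \<in> {1..n}" "x \<noteq> a" "y = fdown a x" unfolding s by auto
      then show "y \<in> {1..n-1}" using a unfolding fdown_def by auto
    qed
    show "{1..n-1} \<subseteq> fdown a ` set ys"
    proof
      fix x assume x: "x \<in> {1..n-1}"
      have "gup a x \<in> {1..n}" using x a unfolding gup_def by auto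
      then have "gup a x \<in> set ys" unfolding s using g_ne[of a x] by simp
      then show "x \<in> fdown a ` set ys" using fg[of a x] by (metis image_eqI)
    qed
  qed
  ultimately show ?thesis using d unfolding is_perm_def by (simp add: distinct_map)
qed

lemma perm_up:
  assumes "is_perm (n - 1) ys" and a: "a \<in> {1..n}"
  shows "is_perm n (a # map (gup a) ys)"
proof -
  have d: "distinct ys" and s: "set ys = {1..n-1}" using assms unfolding is_perm_def by auto
  have inj: "inj_on (gup a) (set ys)" using gup_inj by (rule inj_on_subset) simp
  have img: "gup a ` set ys = {1..n} - {a}"
  proof
    show "gup a ` set ys \<subseteq> {1..n} - {a}"
    proof
      fix y assume "y \<in> gup a ` set ys"
      then obtain x where "x \<in> {1..n-1}" "y = gup a x" unfolding s by auto
      then show "y \<in> {1..n} - {a}" using a g_ne[of a x] unfolding gup_def by auto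
    qed
    show "{1..n} - {a} \<subseteq> gup a ` set ys"
    proof
      fix x assume x: "x \<in> {1..n} - {a}"
      have "fdown a x \<in> set ys" unfolding s using x a unfolding fdown_def by auto
      moreover have "gup a (fdown a x) = x" using gf[of x a] x by simp
      ultimately show "x \<in> gup a ` set ys" by (metis image_eqI)
    qed
  qed
  have "distinct (map (gup a) ys)" using d inj by (simp add: distinct_map)
  moreover have "a \<notin> set (map (gup a) ys)" using img by auto
  moreover have "set (a # map (gup a) ys) = {1..n}" using img a by auto
  ultimately show ?thesis unfolding is_perm_def by simp
qed




lemma del1_fd: "del {1} (a#ys) = map (fdown a) ys"
  unfolding fdown_def[abs_def] by (rule del1_cons)

lemma del1_fdS: "del {Suc 0} (a#ys) = map (fdown a) ys"
  using del1_fd[of a ys] by simp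

lemma gf_map: "a \<notin> set ys \<Longrightarrow> map (gup a) (map (fdown a) ys) = ys"
  by (induction ys) (auto simp: gf)

lemma fg_map: "map (fdown a) (map (gup a) ys) = ys"
  by (induction ys) (auto simp: fg)

lemma take_cons_t: "1 \<le> t \<Longrightarrow> take t (a # xs) = a # take (t - 1) xs"
  by (cases t) auto

lemma main_bij:
  assumes L: "length \<sigma> = t" and t1: "1 \<le> t"
  and lw: "length (a#ws) = t" and dw: "distinct (a#ws)" and sw: "set (a#ws) \<subseteq> {1..n}"
  and ni: "\<not> order_iso (a#ws) \<sigma>"
  shows "bij_betw (del {1}) (SnB {(\<sigma>,{1..t-1})} n (a#ws)) (SnB {(\<sigma>,{1..t-1})} (n-1) (del {1} (a#ws)))"
proof -
  let ?B = "{(\<sigma>,{1..t-1})}"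
  have av: "avoids ?B \<pi> \<longleftrightarrow> \<not> cc \<pi> \<sigma>" for \<pi>
    using cv_iff[of \<pi> \<sigma>] L unfolding avoids_def by simp
  have aS: "a \<in> {1..n}" using sw by simp
  have ana: "a \<notin> set ws" using dw by simp
  have lws: "length ws = t - 1" using lw by simp
  have S: "\<pi> \<in> SnB ?B n (a#ws) \<longleftrightarrow> (\<exists>ys. \<pi> = a # ys \<and> is_perm n (a#ys) \<and> \<not> cc (a#ys) \<sigma> \<and> take (t-1) ys = ws)" for \<pi>
  proof
    assume "\<pi> \<in> SnB ?B n (a#ws)"
    then have p: "is_perm n \<pi>" "\<not> cc \<pi> \<sigma>" "take t \<pi> = a#ws" unfolding SnB_def av using lw by auto
    then obtain ys where "\<pi> = a # ys" "take (t-1) ys = ws"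
      using t1 by (cases \<pi>) (auto simp: take_cons_t)
    then show "\<exists>ys. \<pi> = a # ys \<and> is_perm n (a#ys) \<and> \<not> cc (a#ys) \<sigma> \<and> take (t-1) ys = ws" using p by blast
  next
    assume "\<exists>ys. \<pi> = a # ys \<and> is_perm n (a#ys) \<and> \<not> cc (a#ys) \<sigma> \<and> take (t-1) ys = ws"
    then show "\<pi> \<in> SnB ?B n (a#ws)" unfolding SnB_def av using lw t1 by (auto simp: take_cons_t)
  qed
  have T: "\<pi> \<in> SnB ?B (n-1) (del {1} (a#ws)) \<longleftrightarrow> is_perm (n-1) \<pi> \<and> \<not> cc \<pi> \<sigma> \<and> take (t-1) \<pi> = map (fdown a) ws" for \<pi>
    unfolding SnB_def av del1_fd using lws by simp
  show ?thesis
  proof (rule bij_betw_byWitness[where f'="\<lambda>\<pi>'. a # map (gup a) \<pi>'"])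
    show "\<forall>\<pi>\<in>SnB ?B n (a#ws). a # map (gup a) (del {1} \<pi>) = \<pi>"
    proof
      fix \<pi> assume "\<pi> \<in> SnB ?B n (a#ws)"
      then obtain ys where y: "\<pi> = a # ys" "is_perm n (a#ys)" unfolding S by blast
      then have "a \<notin> set ys" unfolding is_perm_def by simp
      then have "map (gup a) (map (fdown a) ys) = ys" by (rule gf_map)
      then show "a # map (gup a) (del {1} \<pi>) = \<pi>" using y by (simp add: del1_fd del1_fdS)
    qed
    show "\<forall>\<pi>'\<in>SnB ?B (n-1) (del {1} (a#ws)). del {1} (a # map (gup a) \<pi>') = \<pi>'"
      by (simp add: del1_fd del1_fdS fg_map del: map_map)
    show "del {1} ` SnB ?B n (a#ws) \<subseteq> SnB ?B (n-1) (del {1} (a#ws))"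
    proof
      fix \<pi>' assume "\<pi>' \<in> del {1} ` SnB ?B n (a#ws)"
      then obtain \<pi> where "\<pi> \<in> SnB ?B n (a#ws)" "\<pi>' = del {1} \<pi>" by blast
      then obtain ys where y: "\<pi>' = map (fdown a) ys" "is_perm n (a#ys)" "\<not> cc (a#ys) \<sigma>"
        "take (t-1) ys = ws" unfolding S by (auto simp: del1_fd del1_fdS)
      have na: "a \<notin> set ys" using y(2) unfolding is_perm_def by simp
      have "cc (map (fdown a) ys) \<sigma> = cc ys \<sigma>"
      proof (rule cc_map, intro ballI)
        fix x y assume "x \<in> set ys" "y \<in> set ys"
        then have "x \<noteq> a" "y \<noteq> a" using na by auto
        then show "(fdown a x < fdown a y) = (x < y)" by (rule f_mono)
      qed
      then have "\<not> cc \<pi>' \<sigma>" using y(1,3) cc_cons[of a ys \<sigma>] by simp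
      moreover have "is_perm (n-1) \<pi>'" using perm_down[OF y(2)] y(1) by simp
      moreover have "take (t-1) \<pi>' = map (fdown a) ws" using y(1,4) by (simp add: take_map)
      ultimately show "\<pi>' \<in> SnB ?B (n-1) (del {1} (a#ws))" unfolding T by blast
    qed
    show "(\<lambda>\<pi>'. a # map (gup a) \<pi>') ` SnB ?B (n-1) (del {1} (a#ws)) \<subseteq> SnB ?B n (a#ws)"
    proof
      fix \<pi> assume "\<pi> \<in> (\<lambda>\<pi>'. a # map (gup a) \<pi>') ` SnB ?B (n-1) (del {1} (a#ws))"
      then obtain \<pi>' where p0: "\<pi> = a # map (gup a) \<pi>'" "\<pi>' \<in> SnB ?B (n-1) (del {1} (a#ws))"
        by blast
      then have p: "\<pi> = a # map (gup a) \<pi>'" "is_perm (n-1) \<pi>'" "\<not> cc \<pi>' \<sigma>"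
        "take (t-1) \<pi>' = map (fdown a) ws" unfolding T by auto
      have tk: "take (t-1) (map (gup a) \<pi>') = ws"
      proof -
        have "take (t-1) (map (gup a) \<pi>') = map (gup a) (take (t-1) \<pi>')" by (rule take_map)
        also have "\<dots> = map (gup a) (map (fdown a) ws)" using p(4) by simp
        also have "\<dots> = ws" by (rule gf_map[OF ana])
        finally show ?thesis .
      qed
      have "cc (map (gup a) \<pi>') \<sigma> = cc \<pi>' \<sigma>"
        by (rule cc_map) (simp add: g_mono)
      moreover have "take (length \<sigma>) (a # map (gup a) \<pi>') = a # ws"
        using L t1 tk by (simp add: take_cons_t)
      ultimately have "\<not> cc (a # map (gup a) \<pi>') \<sigma>" using p(3) ni cc_cons[of a "map (gup a) \<pi>'" \<sigma>] by simp
      moreover have "is_perm n (a # map (gup a) \<pi>')" using perm_up[OF p(2) aS] .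
      ultimately show "\<pi> \<in> SnB ?B n (a#ws)" unfolding S using p(1) tk by blast
    qed
  qed
qed




lemma ball_triple: "(\<And>p G R. (p,G,R) \<in> E \<Longrightarrow> Q p G R) \<Longrightarrow> \<forall>(p,G,R)\<in>E. Q p G R"
  by auto

lemma rd_empty: "rev_deletable B p {}"
  unfolding rev_deletable_def
proof (intro conjI allI impI)
  fix n w
  have "del {} = id" by (rule ext) (simp add: del_empty)
  then show "bij_betw (del {}) (SnB B n w) (SnB B (n - card {}) (del {} w))" by simp
qed simp

lemma rd_one:
  assumes L: "length \<sigma> = t" and t1: "1 \<le> t" and lp: "length p = t"
  shows "rev_deletable {(\<sigma>,{1..t-1})} p {1}"
  unfolding rev_deletable_def
proof (intro conjI allI impI)
  show "{1} \<subseteq> {1..length p}" using lp t1 by simp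
  fix n w assume a: "admissible n p w \<and> SnB {(\<sigma>,{1..t-1})} n w \<noteq> {}"
  then have lw: "length w = t" and dw: "distinct w" and sw: "set w \<subseteq> {1..n}"
    using lp unfolding admissible_def by auto
  from a obtain \<pi> where \<pi>: "\<pi> \<in> SnB {(\<sigma>,{1..t-1})} n w" by blast
  then have pp: "is_perm n \<pi>" and av: "\<not> contains_vinc \<pi> \<sigma> {1..t-1}" and tk: "take t \<pi> = w"
    unfolding SnB_def avoids_def using lw by auto
  have ln: "length \<pi> = n" using is_perm_length[OF pp] .
  have "t \<le> n" using tk lw ln by (metis length_take min.absorb_iff2 min_def)
  have ni: "\<not> order_iso w \<sigma>"
  proof
    assume "order_iso w \<sigma>"
    then have "cc \<pi> \<sigma>" unfolding cc_def using L tk \<open>t \<le> n\<close> ln by (intro exI[of _ 0]) simp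
    then show False using av cv_iff[of \<pi> \<sigma>] L by simp
  qed
  obtain a ws where w: "w = a # ws" using lw t1 by (cases w) auto
  have "bij_betw (del {1}) (SnB {(\<sigma>,{1..t-1})} n (a#ws)) (SnB {(\<sigma>,{1..t-1})} (n-1) (del {1} (a#ws)))"
    by (rule main_bij) (use L t1 lw dw sw ni w in auto)
  then show "bij_betw (del {1}) (SnB {(\<sigma>,{1..t-1})} n w) (SnB {(\<sigma>,{1..t-1})} (n - card {1::nat}) (del {1} w))"
    using w by simp
qed

theorem mainTheorem4:
  fixes t :: nat and \<sigma> :: "nat list"
  assumes "1 \<le> t" and "is_perm t \<sigma>"
  shows "\<exists>E. finite E \<and> enum_scheme {(\<sigma>, {1..t-1})} E \<and> scheme_depth E = t \<and>
           (\<forall>(p,G,R)\<in>E. R = {} \<or> R = {1})"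
proof -
  have t1: "1 \<le> t" by fact
  have L: "length \<sigma> = t" using is_perm_length[OF assms(2)] .
  define E :: "(nat list \<times> nat list set \<times> nat set) set" where
    "E = (\<lambda>p. (p, {}, {})) ` {p. is_perm (length p) p \<and> length p < t}
       \<union> (\<lambda>p. (p, {}, {1})) ` {p. is_perm (length p) p \<and> length p = t}"
  have mem: "(p,G,R) \<in> E \<longleftrightarrow> (G = {} \<and> R = {} \<and> is_perm (length p) p \<and> length p < t)
     \<or> (G = {} \<and> R = {1} \<and> is_perm (length p) p \<and> length p = t)" for p G R
    unfolding E_def by auto
  define P where "P = {p. is_perm (length p) p \<and> length p \<le> t}"
  have "P \<subseteq> {xs. set xs \<subseteq> {0..t} \<and> length xs \<le> t}"
    unfolding P_def is_perm_def by auto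
  then have fP: "finite P" using finite_lists_length_le[of "{0..t}" t] finite_subset by blast
  have "E \<subseteq> (\<lambda>p. (p, {}, {})) ` P \<union> (\<lambda>p. (p, {}, {1})) ` P"
    unfolding E_def P_def by auto
  then have fE: "finite E" using fP finite_subset by blast
  have es: "enum_scheme {(\<sigma>, {1..t-1})} E"
    unfolding enum_scheme_def
  proof (intro conjI)
    show "([], {}, {}) \<in> E" unfolding mem using t1 by (simp add: is_perm_def)
    show "\<forall>(p,G,R)\<in>E. is_perm (length p) p \<and> (\<forall>v\<in>G. is_gap_vector {(\<sigma>, {1..t-1})} p v)
             \<and> rev_deletable {(\<sigma>, {1..t-1})} p R"
    proof (rule ball_triple)
      fix p G R assume "(p,G,R) \<in> E"
      then consider "G = {}" "R = {}" "is_perm (length p) p" | "G = {}" "R = {1}" "is_perm (length p) p" "length p = t"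
        unfolding mem by blast
      then show "is_perm (length p) p \<and> (\<forall>v\<in>G. is_gap_vector {(\<sigma>, {1..t-1})} p v)
             \<and> rev_deletable {(\<sigma>, {1..t-1})} p R"
      proof cases
        case 1 then show ?thesis using rd_empty by simp
      next
        case 2 then show ?thesis using rd_one[OF L t1] by simp
      qed
    qed
    show "\<forall>(p,G,R)\<in>E. R = {} \<and> replicate (length p + 1) 0 \<notin> G \<longrightarrow>
         (\<forall>p'. is_child p p' \<longrightarrow> (\<exists>G' R'. (p',G',R') \<in> E))"
    proof (rule ball_triple, intro impI allI)
      fix p G R p' assume "(p,G,R) \<in> E" and R: "R = {} \<and> replicate (length p + 1) 0 \<notin> G"
        and c: "is_child p p'"
      then have lp: "length p < t" unfolding mem by auto
      have pp: "is_perm (length p + 1) p'" using c unfolding is_child_def by simp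
      have lp': "length p' = length p + 1" using is_perm_length[OF pp] .
      show "\<exists>G' R'. (p',G',R') \<in> E"
      proof (cases "length p' < t")
        case True then show ?thesis using pp lp' by (intro exI[of _ "{}"] exI[of _ "{}"]) (simp add: mem)
      next
        case False then show ?thesis using pp lp' lp by (intro exI[of _ "{}"] exI[of _ "{1}"]) (simp add: mem)
      qed
    qed
    show "\<forall>(p,G,R)\<in>E. R \<noteq> {} \<longrightarrow> (\<exists>G' R'. (del R p, G', R') \<in> E)"
    proof (rule ball_triple, intro impI)
      fix p G R assume "(p,G,R) \<in> E" and "R \<noteq> {}"
      then have R: "R = {1}" and pp: "is_perm (length p) p" and lp: "length p = t" unfolding mem by auto
      obtain a ys where p: "p = a # ys" using lp t1 by (cases p) auto
      have "is_perm (length p - 1) (map (fdown a) ys)" using perm_down[of "length p" a ys] pp p by simp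
      moreover have "length (map (fdown a) ys) = length p - 1" using p by simp
      ultimately have "(del R p, {}, {}) \<in> E" unfolding mem R p del1_fd using lp t1 p by simp
      then show "\<exists>G' R'. (del R p, G', R') \<in> E" by blast
    qed
  qed
  have sd: "scheme_depth E = t"
    unfolding scheme_depth_def
  proof (rule Max_eqI)
    show "finite ((\<lambda>(p,G,R). length p) ` E)" using fE by simp
    show "y \<le> t" if "y \<in> (\<lambda>(p,G,R). length p) ` E" for y
      using that unfolding mem by (auto simp: E_def)
    have "(\<sigma>, {}, {1}) \<in> E" unfolding mem using L assms(2) by simp
    then show "t \<in> (\<lambda>(p,G,R). length p) ` E" using L by force
  qed
  have "\<forall>(p,G,R)\<in>E. R = {} \<or> R = {1}"
    by (rule ball_triple) (auto simp: mem)
  then show ?thesis using fE es sd by blast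
qed


end
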